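(* Let $m\ge1$, $y\in\mathbb{R}^{2m+1}_+$ with $c:=\sqrt{\sum_{i=0}^{2m}y_i}>0$, and let $(x^t)_{t\ge0}$ be generated by $$x^{t+1}_j=x^t_j\,\frac1c\sum_{\ell=0}^m\frac{x^t_\ell\,y_{\ell+j}}{(x^t*x^t)_{\ell+j}},\qquad j=0,\dots,m,$$ from an initial $x^0\in\mathbb{R}^{m+1}_+$. Let $x^\infty$ be a limit point of $(x^t)$ and assume that $t\mapsto\mathcal{I}(x^\infty\|x^t)$ is decreasing. Then $x^t\to x^\infty$, and $x^\infty$ is the unique limit point of $(x^t)$.
   Context: For $x\in\mathbb{R}^{m+1}$ set $x_k=0$ for $k<0$, $k>m$, and $(x*x)_i=\sum_{j=0}^i x_{i-j}x_j$ for $i=0,\dots,2m$. For nonnegative vectors $u,v$ of equal length, $\mathcal{I}(u\|v)=\sum_i\big(u_i\log\frac{u_i}{v_i}-u_i+v_i\big)$ (convention $0\log0=0$; $+\infty$ if some $u_i>0=v_i$). The iteration is assumed well-defined (denominators positive, e.g. $x^0>0$). *)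

theory Defs
  imports Complex_Main "HOL-Library.Extended_Real"
begin

text \<open>Vectors in R^(m+1) are represented as functions nat => real, only indices 0..m matter;
  entries outside 0..m are treated as 0 by the definitions below.\<close>

definition selfconv :: "nat \<Rightarrow> (nat \<Rightarrow> real) \<Rightarrow> nat \<Rightarrow> real" where
  "selfconv m x i = (\<Sum>j = 0..i. (if i - j \<le> m \<and> j \<le> m then x (i - j) * x j else 0))"

definition idiv_term :: "real \<Rightarrow> real \<Rightarrow> real" where
  "idiv_term u v = (if u = 0 then v else u * ln (u / v) - u + v)"

definition idiv :: "nat \<Rightarrow> (nat \<Rightarrow> real) \<Rightarrow> (nat \<Rightarrow> real) \<Rightarrow> ereal" where
  "idiv m u v = (if \<exists>i\<le>m. u i > 0 \<and> v i = 0 then \<infinity>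
                 else ereal (\<Sum>i = 0..m. idiv_term (u i) (v i)))"

definition limit_point :: "nat \<Rightarrow> (nat \<Rightarrow> nat \<Rightarrow> real) \<Rightarrow> (nat \<Rightarrow> real) \<Rightarrow> bool" where
  "limit_point m x z \<longleftrightarrow> (\<exists>r. strict_mono r \<and> (\<forall>j\<le>m. (\<lambda>k. x (r k) j) \<longlonglongrightarrow> z j))"

end

theory Submission
  imports Defs
begin

lemma idiv_term_lb:
  fixes u v :: real
  assumes "u \<ge> 0" "v \<ge> 0" "u > 0 \<Longrightarrow> v > 0"
  shows "(sqrt u - sqrt v)^2 \<le> idiv_term u v"
proof (cases "u = 0")
  case True thus ?thesis using assms by (simp add: idiv_term_def)
next
  case False
  hence u: "u > 0" using assms by auto
  hence v: "v > 0" using assms by auto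
  define a where "a = sqrt u"
  define b where "b = sqrt v"
  have a: "a > 0" and b: "b > 0" using u v by (auto simp: a_def b_def)
  have ua: "u = a^2" and vb: "v = b^2" using u v by (auto simp: a_def b_def)
  have l1: "ln (b/a) \<le> b/a - 1" using ln_le_minus_one[of "b/a"] a b by simp
  have l2: "ln (u/v) = - 2 * ln (b/a)"
    using a b by (simp add: ua vb ln_div ln_realpow power2_eq_square ln_mult)
  have "a^2 * (2 - 2*(b/a)) \<le> a^2 * ln (u/v)"
    using l1 l2 by (intro mult_left_mono) auto
  moreover have "a^2 * (2 - 2*(b/a)) = 2*a^2 - 2*a*b" using a by (simp add: power2_eq_square field_simps)
  ultimately have "2*a^2 - 2*a*b \<le> u * ln (u/v)" by (simp add: ua)
  moreover have "(sqrt u - sqrt v)^2 = u - 2*a*b + v"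
    using u v by (simp add: a_def b_def power2_diff real_sqrt_mult)
  ultimately show ?thesis using False by (simp add: idiv_term_def ua)
qed

theorem proposition7:
  fixes m :: nat and y :: "nat \<Rightarrow> real" and x :: "nat \<Rightarrow> nat \<Rightarrow> real"
    and c :: real and xinf :: "nat \<Rightarrow> real"
  assumes m: "m \<ge> 1"
    and y_nonneg: "\<forall>i\<le>2*m. y i \<ge> 0"
    and c_def: "c = sqrt (\<Sum>i = 0..2*m. y i)"
    and c_pos: "c > 0"
    and x0_nonneg: "\<forall>j\<le>m. x 0 j \<ge> 0"
    and well_def: "\<forall>t l j. l \<le> m \<longrightarrow> j \<le> m \<longrightarrow> selfconv m (x t) (l + j) > 0"
    and iter: "\<forall>t j. j \<le> m \<longrightarrow>
        x (Suc t) j = x t j * (1 / c) * (\<Sum>l = 0..m. x t l * y (l + j) / selfconv m (x t) (l + j))"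
    and lim: "limit_point m x xinf"
    and decr: "\<forall>t. idiv m xinf (x (Suc t)) \<le> idiv m xinf (x t)"
  shows "(\<forall>j\<le>m. (\<lambda>t. x t j) \<longlonglongrightarrow> xinf j)
       \<and> (\<forall>z. limit_point m x z \<longrightarrow> (\<forall>j\<le>m. z j = xinf j))"
proof -
  have nonneg: "\<forall>j\<le>m. x t j \<ge> 0" for t
  proof (induction t)
    case 0 thus ?case using x0_nonneg by auto
  next
    case (Suc t)
    show ?case
    proof (intro allI impI)
      fix j assume j: "j \<le> m"
      have "(\<Sum>l = 0..m. x t l * y (l + j) / selfconv m (x t) (l + j)) \<ge> 0"
      proof (intro sum_nonneg)
        fix l assume "l \<in> {0..m}"
        hence l: "l \<le> m" by auto
        have "x t l \<ge> 0" using Suc l by auto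
        moreover have "y (l+j) \<ge> 0" using y_nonneg l j by auto
        moreover have "selfconv m (x t) (l + j) > 0" using well_def l j by auto
        ultimately show "x t l * y (l + j) / selfconv m (x t) (l + j) \<ge> 0" by simp
      qed
      moreover have "x t j \<ge> 0" using Suc j by auto
      ultimately show "x (Suc t) j \<ge> 0" using iter j c_pos by simp
    qed
  qed
  define P where "P t = (\<not> (\<exists>i\<le>m. xinf i > 0 \<and> x t i = 0))" for t
  define S where "S t = (\<Sum>i = 0..m. idiv_term (xinf i) (x t i))" for t
  have DS: "P t \<Longrightarrow> idiv m xinf (x t) = ereal (S t)" for t
    by (simp add: idiv_def P_def S_def)
  have step1: "P t \<Longrightarrow> P (Suc t) \<and> S (Suc t) \<le> S t" for t
  proof -
    assume Pt: "P t"
    have "idiv m xinf (x (Suc t)) \<le> ereal (S t)" using decr[rule_format, of t] DS[OF Pt] by simp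
    hence "idiv m xinf (x (Suc t)) \<noteq> \<infinity>" by auto
    hence P1: "P (Suc t)" unfolding P_def idiv_def by presburger
    have "ereal (S (Suc t)) \<le> ereal (S t)" using decr[rule_format, of t] DS[OF P1] DS[OF Pt] by simp
    thus ?thesis using P1 by simp
  qed
  have chain: "s \<le> t \<Longrightarrow> P s \<Longrightarrow> P t \<and> S t \<le> S s" for s t
  proof (induction t rule: dec_induct)
    case base thus ?case by simp
  next
    case (step t) thus ?case using step1[of t] by fastforce
  qed
  from lim obtain r where r: "strict_mono r" and rl: "\<forall>j\<le>m. (\<lambda>k. x (r k) j) \<longlonglongrightarrow> xinf j"
    unfolding limit_point_def by blast
  have xinf_nn: "xinf j \<ge> 0" if "j \<le> m" for j
    using nonneg that by (intro LIMSEQ_le_const[OF rl[rule_format, OF that]]) auto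
  have evP: "eventually (\<lambda>k. P (r k)) sequentially"
  proof -
    have "eventually (\<lambda>k. \<forall>i\<in>{i. i \<le> m \<and> xinf i > 0}. x (r k) i > 0) sequentially"
    proof (rule eventually_ball_finite)
      show "finite {i. i \<le> m \<and> xinf i > 0}" by simp
      show "\<forall>i\<in>{i. i \<le> m \<and> xinf i > 0}. eventually (\<lambda>k. x (r k) i > 0) sequentially"
        using rl by (auto intro: order_tendstoD)
    qed
    thus ?thesis by eventually_elim (auto simp: P_def)
  qed
  have Slim: "(\<lambda>k. S (r k)) \<longlonglongrightarrow> 0"
  proof -
    have "(\<lambda>k. \<Sum>i = 0..m. idiv_term (xinf i) (x (r k) i)) \<longlonglongrightarrow> (\<Sum>i = 0..m. 0)"
    proof (intro tendsto_sum)
      fix i assume "i \<in> {0..m}"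
      hence i: "i \<le> m" by auto
      show "(\<lambda>k. idiv_term (xinf i) (x (r k) i)) \<longlonglongrightarrow> 0"
      proof (cases "xinf i = 0")
        case True
        have "(\<lambda>k. x (r k) i) \<longlonglongrightarrow> xinf i" using rl i by blast
        hence "(\<lambda>k. x (r k) i) \<longlonglongrightarrow> 0" using True by simp
        thus ?thesis using True by (simp add: idiv_term_def)
      next
        case False
        have "(\<lambda>k. xinf i * ln (xinf i / x (r k) i) - xinf i + x (r k) i) \<longlonglongrightarrow>
              xinf i * ln (xinf i / xinf i) - xinf i + xinf i"
        proof -
          have xi: "(\<lambda>k. x (r k) i) \<longlonglongrightarrow> xinf i" using rl i by blast
          have "(\<lambda>k. ln (xinf i / x (r k) i)) \<longlonglongrightarrow> ln (xinf i / xinf i)"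
            by (rule tendsto_ln[OF tendsto_divide[OF tendsto_const xi]]) (use False xinf_nn[OF i] in simp_all)
          thus ?thesis by (intro tendsto_diff tendsto_add tendsto_mult tendsto_const xi)
        qed
        thus ?thesis using False by (simp add: idiv_term_def)
      qed
    qed
    thus ?thesis by (simp add: S_def)
  qed
  have sq: "(\<lambda>t. sqrt (x t j)) \<longlonglongrightarrow> sqrt (xinf j)" if j: "j \<le> m" for j
  proof (rule LIMSEQ_I)
    fix e :: real assume e: "e > 0"
    have "eventually (\<lambda>k. P (r k) \<and> S (r k) < e^2) sequentially"
    proof (rule eventually_conj[OF evP])
      have "0 < e^2" using e by simp
      from order_tendstoD(2)[OF Slim this] show "\<forall>\<^sub>F k in sequentially. S (r k) < e^2" .
    qed
    then obtain N where N: "\<forall>k\<ge>N. P (r k) \<and> S (r k) < e^2" unfolding eventually_sequentially by blast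
    define k where "k = N"
    have k: "P (r k)" "S (r k) < e^2" using N by (auto simp: k_def)
    show "\<exists>no. \<forall>n\<ge>no. norm (sqrt (x n j) - sqrt (xinf j)) < e"
    proof (intro exI allI impI)
      fix n assume n: "r k \<le> n"
      from chain[OF n k(1)] have Pn: "P n" and Sn: "S n \<le> S (r k)" by auto
      have lb: "(sqrt (xinf i) - sqrt (x n i))^2 \<le> idiv_term (xinf i) (x n i)" if i: "i \<le> m" for i
      proof (rule idiv_term_lb)
        show "0 \<le> xinf i" using xinf_nn[OF i] .
        show "0 \<le> x n i" using nonneg[of n] i by blast
        assume "0 < xinf i"
        hence "x n i \<noteq> 0" using Pn i unfolding P_def by blast
        thus "0 < x n i" using \<open>0 \<le> x n i\<close> by linarith
      qed
      have nn: "\<forall>i\<in>{0..m} - {j}. 0 \<le> idiv_term (xinf i) (x n i)"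
      proof
        fix i assume "i \<in> {0..m} - {j}"
        hence "i \<le> m" by auto
        from lb[OF this] show "0 \<le> idiv_term (xinf i) (x n i)"
          by (meson order_trans zero_le_power2)
      qed
      have "idiv_term (xinf j) (x n j) \<le> S n"
        unfolding S_def using j nn by (intro member_le_sum) auto
      hence d: "(sqrt (xinf j) - sqrt (x n j))^2 < e^2" using lb[OF j] Sn k(2) by linarith
      have "\<bar>sqrt (xinf j) - sqrt (x n j)\<bar> < e"
        by (rule power_less_imp_less_base[of _ 2]) (use d e in auto)
      thus "norm (sqrt (x n j) - sqrt (xinf j)) < e" by simp
    qed
  qed
  have conv: "\<forall>j\<le>m. (\<lambda>t. x t j) \<longlonglongrightarrow> xinf j"
  proof (intro allI impI)
    fix j assume j: "j \<le> m"
    have "(\<lambda>t. (sqrt (x t j))^2) \<longlonglongrightarrow> (sqrt (xinf j))^2" by (intro tendsto_intros sq j)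
    thus "(\<lambda>t. x t j) \<longlonglongrightarrow> xinf j" using nonneg xinf_nn[OF j] j by simp
  qed
  moreover have "\<forall>z. limit_point m x z \<longrightarrow> (\<forall>j\<le>m. z j = xinf j)"
  proof (intro allI impI)
    fix z j assume lz: "limit_point m x z" and j: "j \<le> m"
    from lz obtain q where q: "strict_mono q" and ql: "\<forall>j\<le>m. (\<lambda>k. x (q k) j) \<longlonglongrightarrow> z j"
      unfolding limit_point_def by blast
    have "((\<lambda>t. x t j) \<circ> q) \<longlonglongrightarrow> xinf j" using conv j q by (intro LIMSEQ_subseq_LIMSEQ) auto
    moreover have "((\<lambda>t. x t j) \<circ> q) \<longlonglongrightarrow> z j" using ql j by (simp add: comp_def)
    ultimately show "z j = xinf j" using LIMSEQ_unique by metis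
  qed
  ultimately show ?thesis by blast
qed

end
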